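(* Let $n\ge4$, let $0<\alpha_2,\alpha_3<1$, $\alpha_1=1-\alpha_2-\alpha_3$, and $\lambda^*=\big(\frac{n-1+\alpha_1}{n},\frac{\alpha_2}{n},\frac{\alpha_3}{n}\big)$. Let $i=(i_1,i_2,i_3)\in I$ with $i_2\ge1$, $i_3\ge1$, $i_2+i_3\ge3$. Then (a) if $i_2\ge1$ and $i_3\ge2$, $$|l_i(\lambda^* )|\le\frac{1-\alpha_3}{e(\ln n-\ln2)}\cdot\frac{\Gamma(n+1)}{i_1!\,\Gamma(n-i_1)}\cdot\frac{\nu_2(i_2)}{i_2^{1+\alpha_2}\,i_3(i_3-1)};$$ (b) if $i_2\ge2$ and $i_3\ge1$, $$|l_i(\lambda^* )|\le\frac{1-\alpha_2}{e(\ln n-\ln2)}\cdot\frac{\Gamma(n+1)}{i_1!\,\Gamma(n-i_1)}\cdot\frac{\nu_3(i_3)}{i_3^{1+\alpha_3}\,i_2(i_2-1)}.$$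
   Context: For an integer $n\ge1$ let $I=\{i=(i_1,i_2,i_3)\in\mathbb{Z}_+^3: i_1+i_2+i_3=n\}$ and $l_i(\lambda)=\prod_{s=1}^{3}\frac{1}{i_s!}\prod_{t=0}^{i_s-1}(n\lambda_s-t)$ for $\lambda=(\lambda_1,\lambda_2,\lambda_3)$ (Lagrange fundamental polynomials for the equally spaced nodes $i/n$ of a triangle in barycentric coordinates). For $p=2,3$ and positive integers $s$: $\nu_p(1)=\alpha_p$ and $\nu_p(s)=\alpha_p(1-\alpha_p)2^{\alpha_p}$ for $s\ge2$. *)

theory Defs
  imports "HOL-Analysis.Analysis"
begin

definition idx_set :: "nat \<Rightarrow> (nat \<times> nat \<times> nat) set" where
  "idx_set n = {(i1, i2, i3). i1 + i2 + i3 = n}"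

definition lag_factor :: "nat \<Rightarrow> nat \<Rightarrow> real \<Rightarrow> real" where
  "lag_factor n k x = (\<Prod>t<k. real n * x - real t) / fact k"

text \<open>Lagrange fundamental polynomial l_i(lambda) in barycentric coordinates.\<close>
definition lagr :: "nat \<Rightarrow> nat \<times> nat \<times> nat \<Rightarrow> real \<times> real \<times> real \<Rightarrow> real" where
  "lagr n i lam = (case i of (i1, i2, i3) \<Rightarrow> case lam of (l1, l2, l3) \<Rightarrow>
      lag_factor n i1 l1 * lag_factor n i2 l2 * lag_factor n i3 l3)"

definition nu :: "real \<Rightarrow> nat \<Rightarrow> real" where
  "nu a s = (if s = 1 then a else a * (1 - a) * 2 powr a)"

end

theory Submission
  imports Defs
begin

definition lf :: "nat \<Rightarrow> real \<Rightarrow> real" where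
  "lf k x = (\<Prod>t<k. x - real t) / fact k"

lemma lag_factor_lf: "lag_factor n k y = lf k (real n * y)"
  by (simp add: lag_factor_def lf_def)

lemma lf_0[simp]: "lf 0 x = 1" by (simp add: lf_def)

lemma lf_Suc: "lf (Suc k) x = lf k x * (x - real k) / (real k + 1)"
  by (simp add: lf_def field_simps)

lemma bern_aux:
  fixes j p :: real
  assumes "j \<ge> 1" "0 \<le> p" "p \<le> 1"
  shows "(j - p) * (j + 1) powr p \<le> j * j powr p"
proof -
  have "(1 + 1/j) powr p = exp (p * ln (1 + 1/j))"
  proof -
    have "1 + 1/j > 0" using assms by (simp add: add_pos_nonneg)
    thus ?thesis by (simp add: powr_def)
  qed
  also have "\<dots> \<le> exp (p / j)"
  proof -
    have "1 + 1/j > 0" using assms by (simp add: add_pos_nonneg)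
    hence "ln (1 + 1/j) \<le> 1/j" using ln_le_minus_one[of "1+1/j"] by simp
    hence "p * ln (1 + 1/j) \<le> p * (1/j)" using assms by (intro mult_left_mono) auto
    thus ?thesis by simp
  qed
  finally have h1: "(1 + 1/j) powr p \<le> exp (p/j)" .
  have h2: "1 - p/j \<le> exp (-(p/j))" using exp_ge_add_one_self[of "-(p/j)"] by simp
  have h3: "0 \<le> 1 - p/j" using assms by (simp add: field_simps)
  have "(1 - p/j) * (1 + 1/j) powr p \<le> exp (-(p/j)) * exp (p/j)"
    using h1 h2 h3 by (intro mult_mono) auto
  also have "\<dots> = 1" by (simp add: exp_add[symmetric])
  finally have h4: "(1 - p/j) * (1 + 1/j) powr p \<le> 1" .
  have "j powr p * (1 + 1/j) powr p = (j * (1 + 1/j)) powr p"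
    using assms by (subst powr_mult) (auto simp: add_pos_nonneg)
  also have "j * (1 + 1/j) = j + 1" using assms by (simp add: field_simps)
  finally have "(j + 1) powr p = j powr p * (1 + 1/j) powr p" by simp
  moreover have "j - p = j * (1 - p/j)" using assms by (simp add: field_simps)
  ultimately have "(j - p) * (j + 1) powr p = (j * j powr p) * ((1 - p/j) * (1 + 1/j) powr p)"
    by simp
  also have "\<dots> \<le> (j * j powr p) * 1"
    using h4 assms by (intro mult_left_mono) auto
  finally show ?thesis by simp
qed

lemma stepA_aux:
  fixes p :: real
  assumes "0 < p" "p < 1"
  shows "\<bar>lf (m+2) p\<bar> * real (m+2) powr (1+p) \<le> p * (1-p) * 2 powr p"
proof (induction m)
  case 0
  have "lf 2 p = p * (p - 1) / 2" by (simp add: lf_def numeral_2_eq_2)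
  moreover have "p * (p - 1) < 0" using assms by (simp add: mult_pos_neg)
  ultimately have "\<bar>lf 2 p\<bar> = p * (1 - p) / 2" by (simp add: algebra_simps)
  moreover have "(2::real) powr (1+p) = 2 * 2 powr p" by (simp add: powr_add)
  ultimately show ?case by (simp add: numeral_2_eq_2[symmetric])
next
  case (Suc m)
  define j where "j = real (m+2)"
  have j1: "j \<ge> 1" by (simp add: j_def)
  have e1: "lf (Suc m + 2) p = lf (m+2) p * (p - j) / (j + 1)"
    by (simp add: j_def lf_Suc)
  have e2: "\<bar>lf (Suc m + 2) p\<bar> = \<bar>lf (m+2) p\<bar> * (j - p) / (j + 1)"
  proof -
    have "\<bar>p - j\<bar> = j - p" using j1 assms by simp
    moreover have "\<bar>j + 1\<bar> = j + 1" using j1 by simp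
    ultimately show ?thesis unfolding e1 by (simp only: abs_mult abs_divide)
  qed
  have e3: "real (Suc m + 2) powr (1+p) = (j+1) * (j+1) powr p"
    by (simp add: j_def powr_add add_ac)
  have e4: "real (m + 2) powr (1+p) = j * j powr p"
    by (simp add: j_def powr_add)
  have "\<bar>lf (Suc m + 2) p\<bar> * real (Suc m + 2) powr (1+p)
        = \<bar>lf (m+2) p\<bar> * (j - p) / (j + 1) * ((j+1) * (j+1) powr p)"
    by (simp only: e2 e3)
  also have "\<dots> = \<bar>lf (m+2) p\<bar> * ((j - p) * (j+1) powr p)"
    using j1 by (simp add: field_simps)
  also have "\<dots> \<le> \<bar>lf (m+2) p\<bar> * (j * j powr p)"
    by (intro mult_left_mono bern_aux) (use j1 assms in auto)
  also have "\<dots> \<le> p * (1-p) * 2 powr p" using Suc.IH e4 by simp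
  finally show ?case .
qed

lemma stepA:
  fixes p :: real
  assumes "0 < p" "p < 1" "j \<ge> 1"
  shows "\<bar>lf j p\<bar> \<le> nu p j / real j powr (1+p)"
proof (cases "j = 1")
  case True
  thus ?thesis using assms by (simp add: nu_def lf_def)
next
  case False
  then obtain m where m: "j = m + 2" using assms by (metis add.commute le_Suc_ex Suc_1 le_antisym not_less_eq_eq)
  have pos: "real j powr (1+p) > 0" using assms by simp
  have "\<bar>lf j p\<bar> * real j powr (1+p) \<le> nu p j"
    using stepA_aux[OF assms(1,2), of m] False by (simp add: m nu_def)
  thus ?thesis using pos by (simp add: field_simps)
qed

lemma K1:
  fixes b t :: real
  assumes "0 \<le> b" "b \<le> 1" "0 \<le> t" "t < 1"
  shows "ln (1 + b * t) - ln (1 - b * t) \<le> b * (ln (1 + t) - ln (1 - t))"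
proof -
  define f where "f s = b * (ln (1 + s) - ln (1 - s)) - (ln (1 + b * s) - ln (1 - b * s))" for s :: real
  have "f 0 \<le> f t"
  proof (rule DERIV_nonneg_imp_nondecreasing[OF assms(3)])
    fix s assume s: "0 \<le> s" "s \<le> t"
    have s1: "s < 1" using s assms by simp
    have bs: "b * s \<le> s" using s assms mult_right_mono[of b 1 s] by simp
    have bs0: "0 \<le> b * s" using s assms by simp
    have bs1: "b * s < 1" using bs s1 by simp
    have D: "DERIV f s :> b * (1/(1+s) + 1/(1-s)) - (b/(1+b * s) + b/(1-b * s))"
      unfolding f_def
      by (rule derivative_eq_intros refl | use s1 bs1 bs0 s in simp)+
    have e1: "1/(1+s) + 1/(1-s) = 2 / (1 - s^2)" using s1 s by (simp add: field_simps power2_eq_square)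
    have e2: "b/(1+b * s) + b/(1-b * s) = b * (2 / (1 - (b * s)^2))" using bs1 bs0 by (simp add: field_simps power2_eq_square)
    have "(b * s)^2 \<le> s^2" using bs bs0 by (simp add: power_mono)
    moreover have "s^2 < 1" using s s1 by (simp add: power_less_one_iff abs_less_iff)
    ultimately have "2 / (1 - (b * s)^2) \<le> 2 / (1 - s^2)"
      by (intro divide_left_mono) auto
    hence "b * (2 / (1 - (b * s)^2)) \<le> b * (2 / (1 - s^2))"
      using assms by (intro mult_left_mono) auto
    hence "0 \<le> b * (1/(1+s) + 1/(1-s)) - (b/(1+b * s) + b/(1-b * s))"
      unfolding e1 e2 by linarith
    thus "\<exists>y. DERIV f s :> y \<and> 0 \<le> y" using D by blast
  qed
  thus ?thesis by (simp add: f_def)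
qed

lemma K2:
  fixes b y :: real
  assumes "0 \<le> b" "b \<le> 1" "1 < y"
  shows "(y + b) / (y - b) \<le> ((y + 1) / (y - 1)) powr b"
proof -
  define t where "t = 1 / y"
  have t: "0 \<le> t" "t < 1" using assms by (auto simp: t_def)
  have bt: "b * t < 1" using t assms mult_right_mono[of b 1 t] by simp
  have bt0: "0 \<le> b * t" using t assms by simp
  have y0: "y > 0" using assms by simp
  have yb: "y - b > 0" using assms by simp
  have "(y + b) / (y - b) = (1 + b * t) / (1 - b * t)"
    using y0 yb by (simp add: t_def field_simps)
  also have "\<dots> = exp (ln (1 + b * t) - ln (1 - b * t))"
    using bt bt0 by (simp add: exp_diff)
  also have "\<dots> \<le> exp (b * (ln (1 + t) - ln (1 - t)))"
    using K1[OF assms(1,2) t] by simp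
  also have "\<dots> = ((1 + t) / (1 - t)) powr b"
    using t by (simp add: powr_def ln_div)
  also have "(1 + t) / (1 - t) = (y + 1) / (y - 1)"
    using y0 assms by (simp add: t_def field_simps)
  finally show ?thesis .
qed

definition PP :: "real \<Rightarrow> nat \<Rightarrow> real" where
  "PP b j = (\<Prod>t<j. 1 + b / (real t + 1))"

lemma PP_Suc: "PP b (Suc j) = PP b j * (1 + b / (real j + 1))"
  by (simp add: PP_def)

lemma PP_bound:
  fixes b :: real
  assumes "0 < b" "b \<le> 1"
  shows "PP b m \<le> ((real m + (1+b)/2) / ((1+b)/2)) powr b"
proof (induction m)
  case 0
  then show ?case using assms by (simp add: PP_def)
next
  case (Suc m)
  define c where "c = (1+b)/2"
  have c0: "c > 0" using assms by (simp add: c_def)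
  define y where "y = 2 * real m + 2 + b"
  have y1: "y > 1" using assms by (simp add: y_def)
  have e1: "1 + b / (real m + 1) = (y + b) / (y - b)" by (simp add: y_def field_simps)
  have mc: "real m + c > 0" using c0 by simp
  have e2: "(y + 1) / (y - 1) = (real (Suc m) + c) / (real m + c)"
  proof -
    have "(y + 1) = 2 * (real (Suc m) + c)" "y - 1 = 2 * (real m + c)"
      by (simp_all add: y_def c_def field_simps)
    thus ?thesis using mc by (simp add: field_simps)
  qed
  have "PP b (Suc m) = PP b m * ((y + b) / (y - b))" by (simp add: PP_Suc e1)
  also have "\<dots> \<le> ((real m + c) / c) powr b * (((y + 1) / (y - 1)) powr b)"
    using Suc.IH K2[of b y] y1 assms
    by (intro mult_mono) (auto simp: c_def PP_def intro!: prod_nonneg add_nonneg_nonneg)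
  also have "\<dots> = ((real m + c) / c * ((real (Suc m) + c) / (real m + c))) powr b"
    unfolding e2 using c0 by (subst powr_mult) auto
  also have "(real m + c) / c * ((real (Suc m) + c) / (real m + c)) = (real (Suc m) + c) / c"
    using c0 mc by (simp add: divide_simps)
  finally show ?case by (simp add: c_def)
qed

lemma lemD:
  fixes q :: real
  assumes "0 < q" "q < 1" "n \<ge> 4"
  shows "q * PP (1-q) (n-3) \<le> real n / (exp 1 * (ln (real n) - ln 2))"
proof -
  define b where "b = 1 - q"
  define c where "c = 1 - q/2"
  define L where "L = ln (real n) - ln 2"
  have b: "0 < b" "b \<le> 1" using assms by (auto simp: b_def)
  have c: "0 < c" "c \<le> 1" using assms by (auto simp: c_def)
  have cc: "(1+b)/2 = c" by (simp add: b_def c_def)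
  have n0: "real n > 0" "real n \<ge> 4" using assms by auto
  have L0: "L > 0" using n0 by (simp add: L_def)
  have "PP b (n-3) \<le> ((real (n-3) + c) / c) powr b" using PP_bound[OF b] cc by simp
  also have "\<dots> \<le> (real n / c) powr b"
  proof (rule powr_mono2)
    show "0 \<le> (real (n - 3) + c) / c" using c by simp
    have "real (n-3) + c \<le> real n" using assms c by (simp add: of_nat_diff)
    thus "(real (n - 3) + c) / c \<le> real n / c" using c by (simp add: divide_right_mono)
  qed (use b in auto)
  also have "\<dots> = real n powr b / c powr b" using c n0 by (simp add: powr_divide)
  finally have P1: "PP b (n-3) \<le> real n powr b / c powr b" .
  have lnc: "ln c \<ge> - q / (2 - q)"
  proof -
    have "ln (1/c) \<le> 1/c - 1" using c by (intro ln_le_minus_one) auto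
    hence "ln c \<ge> 1 - 1/c" using c by (simp add: ln_div)
    moreover have "1 - 1/c = - q/(2-q)" using assms by (simp add: c_def field_simps)
    ultimately show ?thesis by simp
  qed
  have h1: "b * (q / (2 - q)) \<le> q / 2"
    using assms by (simp add: b_def field_simps)
  have h2: "b * (- q / (2 - q)) \<le> b * ln c" using lnc b by (intro mult_left_mono) auto
  have "b * (- q / (2 - q)) = - (b * (q / (2 - q)))" by simp
  hence "b * ln c \<ge> - q / 2" using h1 h2 by linarith
  moreover have "q * ln 2 \<ge> q / 2" using ln2_ge_two_thirds assms by simp
  ultimately have "0 \<le> q * ln 2 + b * ln c" by simp
  hence K: "1 \<le> 2 powr q * c powr b"
    using c by (simp add: powr_def exp_add[symmetric])
  have E: "exp 1 * (q * L) \<le> exp (q * L)"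
  proof -
    have "1 + (q*L - 1) \<le> exp (q*L - 1)" by (rule exp_ge_add_one_self)
    hence "q * L \<le> exp (q * L) / exp 1" by (simp add: exp_diff)
    thus ?thesis by (simp add: field_simps)
  qed
  have nq: "real n powr q = 2 powr q * exp (q * L)"
    using n0 by (simp add: powr_def L_def exp_add[symmetric] algebra_simps)
  have M: "q * exp 1 * L \<le> real n powr q * c powr b"
  proof -
    have "q * exp 1 * L = exp 1 * (q * L) * 1" by simp
    also have "\<dots> \<le> exp (q * L) * (2 powr q * c powr b)"
      using E K L0 assms by (intro mult_mono) auto
    also have "\<dots> = real n powr q * c powr b" by (simp add: nq)
    finally show ?thesis .
  qed
  have nn: "real n = real n powr b * real n powr q"
    using n0 by (simp add: powr_add[symmetric] b_def)
  have cb: "c powr b > 0" using c by simp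
  have "q * PP b (n-3) \<le> q * (real n powr b / c powr b)"
    using P1 assms by (intro mult_left_mono) auto
  also have "\<dots> \<le> real n / (exp 1 * L)"
  proof -
    have "q * exp 1 * L * real n powr b \<le> real n powr q * c powr b * real n powr b"
      using M by (intro mult_right_mono) auto
    hence "q * exp 1 * L * real n powr b \<le> real n * c powr b"
      by (subst nn) (simp add: algebra_simps)
    thus ?thesis using cb L0 by (simp add: field_simps)
  qed
  finally show ?thesis by (simp add: b_def L_def)
qed

lemma PP_ge1: "0 \<le> b \<Longrightarrow> PP b j \<ge> 1"
  unfolding PP_def by (rule prod_ge_1) auto

lemma PP_mono: assumes "0 \<le> b" "j \<le> m" shows "PP b j \<le> PP b m"
  using assms(2)
proof (induction m rule: dec_induct)
  case base then show ?case by simp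
next
  case (step m)
  have "PP b m * 1 \<le> PP b m * (1 + b / (real m + 1))"
    using PP_ge1[OF assms(1), of m] assms by (intro mult_left_mono) auto
  then show ?case using step by (simp add: PP_Suc)
qed

lemma lf_k:
  fixes q :: real
  assumes that: "0 < q" "q < 1"
  shows "\<bar>lf (m+2) q\<bar> * (real (m+2) * (real (m+2) - 1)) = \<bar>q * (q - 1)\<bar> * PP (1-q) m"
proof (induction m)
  case 0
  show ?case by (simp add: lf_def PP_def numeral_2_eq_2 abs_mult)
next
  case (Suc m)
  define j where "j = real m + 2"
  have j: "j \<ge> 2" by (simp add: j_def)
  have e1: "lf (Suc m + 2) q = lf (m+2) q * (q - j) / (j + 1)"
    by (simp add: j_def lf_Suc)
  have e2: "\<bar>lf (Suc m + 2) q\<bar> = \<bar>lf (m+2) q\<bar> * (j - q) / (j + 1)"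
  proof -
    have "\<bar>q - j\<bar> = j - q" using j that by simp
    moreover have "\<bar>j + 1\<bar> = j + 1" using j by simp
    ultimately show ?thesis unfolding e1 by (simp only: abs_mult abs_divide)
  qed
  have e3: "real (Suc m + 2) * (real (Suc m + 2) - 1) = (j + 1) * j" by (simp add: j_def)
  have e4: "real (m + 2) * (real (m + 2) - 1) = j * (j - 1)" by (simp add: j_def)
  have "\<bar>lf (Suc m + 2) q\<bar> * (real (Suc m + 2) * (real (Suc m + 2) - 1))
      = \<bar>lf (m+2) q\<bar> * (j - q) / (j + 1) * ((j + 1) * j)" by (simp only: e2 e3)
  also have "\<dots> = (\<bar>lf (m+2) q\<bar> * (j * (j - 1))) * ((j - q) / (j - 1))"
    using j by (simp add: field_simps)
  also have "\<dots> = \<bar>q * (q - 1)\<bar> * PP (1-q) m * ((j - q) / (j - 1))"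
    using Suc.IH e4 by simp
  also have "(j - q) / (j - 1) = 1 + (1 - q) / (real m + 1)"
    using j by (simp add: j_def field_simps)
  finally show ?case by (simp add: PP_Suc)
qed

lemma comb:
  fixes b :: real
  assumes "0 \<le> b"
  shows "j + i \<le> N \<Longrightarrow> PP b j * (\<Prod>t<i. 1 + b / (real N - real t)) \<le> PP b (j + i)"
proof (induction i arbitrary: j)
  case 0 then show ?case by simp
next
  case (Suc i)
  have NI: "real N - real i \<ge> real j + 1" using Suc.prems by simp
  have pos: "real N - real i > 0" using NI by simp
  have g0: "0 \<le> (\<Prod>t<i. 1 + b / (real N - real t))"
    using Suc.prems assms by (intro prod_nonneg) (auto intro!: add_nonneg_nonneg divide_nonneg_nonneg)
  have "b / (real N - real i) \<le> b / (real j + 1)"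
    using NI assms by (intro divide_left_mono) auto
  hence s1: "PP b j * (1 + b / (real N - real i)) \<le> PP b (Suc j)"
    using PP_ge1[OF assms, of j] by (simp add: PP_Suc mult_left_mono)
  have "PP b j * (\<Prod>t<Suc i. 1 + b / (real N - real t))
      = (PP b j * (1 + b / (real N - real i))) * (\<Prod>t<i. 1 + b / (real N - real t))"
    by (simp add: algebra_simps)
  also have "\<dots> \<le> PP b (Suc j) * (\<Prod>t<i. 1 + b / (real N - real t))"
    using s1 g0 by (intro mult_right_mono) auto
  also have "\<dots> \<le> PP b (Suc j + i)" using Suc.IH[of "Suc j"] Suc.prems by simp
  finally show ?case by simp
qed

lemma fact_split:
  "i \<le> N \<Longrightarrow> (fact N :: real) = (\<Prod>t<i. real N - real t) * fact (N - i)"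
proof (induction i)
  case 0 then show ?case by simp
next
  case (Suc i)
  have "fact (N - i) = (real N - real i) * (fact (N - Suc i) :: real)"
  proof -
    have "N - i = Suc (N - Suc i)" using Suc.prems by simp
    hence "(fact (N - i) :: real) = real (Suc (N - Suc i)) * fact (N - Suc i)"
      by (simp del: of_nat_Suc)
    moreover have "real (Suc (N - Suc i)) = real N - real i" using Suc.prems by (simp add: of_nat_diff)
    ultimately show ?thesis by simp
  qed
  note fe = this
  have "(fact N :: real) = (\<Prod>t<i. real N - real t) * fact (N - i)" using Suc by simp
  also have "\<dots> = (\<Prod>t<i. real N - real t) * ((real N - real i) * fact (N - Suc i))"
    by (simp only: fe)
  also have "\<dots> = ((\<Prod>t<i. real N - real t) * (real N - real i)) * fact (N - Suc i)"
    by (simp only: mult.assoc)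
  finally show ?case by (simp only: prod.lessThan_Suc)
qed

lemma lemA1:
  fixes X b a1 :: real
  assumes "a1 \<le> b" "-1 < a1" "i \<le> N - 2" "N \<ge> 2"
  shows "\<bar>lf i (real N + a1)\<bar> \<le> (\<Prod>t<i. real N - real t) / fact i * (\<Prod>t<i. 1 + b / (real N - real t))"
proof -
  have f0: "0 \<le> real N + a1 - real t" if "t < i" for t
    using that assms by (simp add: of_nat_diff)
  have f1: "real N + a1 - real t \<le> (real N - real t) * (1 + b / (real N - real t))" if "t < i" for t
  proof -
    have "real N - real t > 0" using that assms by simp
    hence "(real N - real t) * (1 + b / (real N - real t)) = real N - real t + b" by (simp add: field_simps)
    thus ?thesis using assms by simp
  qed
  have "\<bar>lf i (real N + a1)\<bar> = (\<Prod>t<i. real N + a1 - real t) / fact i"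
  proof -
    have "0 \<le> (\<Prod>t<i. real N + a1 - real t)" by (rule prod_nonneg) (use f0 in auto)
    thus ?thesis unfolding lf_def by (simp add: abs_divide)
  qed
  also have "\<dots> \<le> (\<Prod>t<i. (real N - real t) * (1 + b / (real N - real t))) / fact i"
    by (intro divide_right_mono prod_mono) (use f0 f1 in auto)
  also have "\<dots> = (\<Prod>t<i. real N - real t) / fact i * (\<Prod>t<i. 1 + b / (real N - real t))"
    by (simp add: prod.distrib)
  finally show ?thesis .
qed

lemma GL:
  fixes n i1 j k :: nat and p q a1 :: real
  assumes n4: "n \<ge> 4" and p: "0 < p" "p < 1" and q: "0 < q" "q < 1"
    and a1: "a1 = 1 - p - q" and s: "i1 + j + k = n" and j1: "j \<ge> 1" and k2: "k \<ge> 2"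
  shows "\<bar>lf i1 (real n - 1 + a1) * lf j p * lf k q\<bar> \<le>
     (1 - q) / (exp 1 * (ln (real n) - ln 2))
     * (Gamma (real n + 1) / (fact i1 * Gamma (real n - real i1)))
     * (nu p j / (real j powr (1 + p) * (real k * (real k - 1))))"
proof -
  define N where "N = n - 1"
  define b where "b = 1 - q"
  define m where "m = k - 2"
  define L where "L = ln (real n) - ln 2"
  define F where "F = (\<Prod>t<i1. real N - real t) / fact i1"
  define Q where "Q = (\<Prod>t<i1. 1 + b / (real N - real t))"
  define V where "V = nu p j / real j powr (1 + p)"
  define KK where "KK = real k * (real k - 1)"
  have RN: "real N = real n - 1" using n4 by (simp add: N_def of_nat_diff)
  have km: "k = m + 2" using k2 by (simp add: m_def)
  have KK0: "KK > 0" using k2 by (simp add: KK_def)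
  have L0: "L > 0" using n4 by (simp add: L_def)
  have b0: "0 < b" using q by (simp add: b_def)
  have i1N: "i1 \<le> N - 2" using s j1 k2 by (simp add: N_def)
  have F0: "F \<ge> 0" unfolding F_def using i1N by (intro divide_nonneg_nonneg prod_nonneg) auto
  have Q0: "Q \<ge> 0" unfolding Q_def using i1N b0
    by (intro prod_nonneg) (auto intro!: add_nonneg_nonneg divide_nonneg_nonneg)
  have A1: "\<bar>lf i1 (real n - 1 + a1)\<bar> \<le> F * Q"
    using lemA1[of a1 b i1 N] i1N n4 a1 p q unfolding F_def Q_def RN[symmetric] b_def
    by (simp add: N_def)
  have A2: "\<bar>lf j p\<bar> \<le> V" using stepA[OF p j1] by (simp add: V_def)
  have A3: "\<bar>lf k q\<bar> * KK = q * b * PP b m"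
  proof -
    have "\<bar>q * (q - 1)\<bar> = q * b" using q by (simp add: b_def abs_mult)
    thus ?thesis using lf_k[OF q, of m] by (simp add: km KK_def b_def)
  qed
  have C1: "PP b m * Q \<le> PP b (m + i1)"
  proof -
    have "m + i1 \<le> N" using s k2 j1 by (simp add: m_def N_def)
    from comb[OF less_imp_le[OF b0] this] show ?thesis unfolding Q_def .
  qed
  have C2: "PP b (m + i1) \<le> PP b (n - 3)"
    using PP_mono[of b "m + i1" "n - 3"] b0 s j1 k2 by (simp add: m_def)
  have D: "q * PP b (n - 3) \<le> real n / (exp 1 * L)"
    using lemD[OF q n4] by (simp add: b_def L_def)
  have PPQ: "q * (PP b m * Q) \<le> real n / (exp 1 * L)"
    using C1 C2 D q by (meson mult_left_mono order_trans less_imp_le)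
  have G1: "Gamma (real n + 1) = fact n" using Gamma_fact[of n] by (simp add: add.commute)
  have G2: "Gamma (real n - real i1) = fact (N - i1)"
  proof -
    have "real n - real i1 = 1 + real (N - i1)" using i1N n4 by (simp add: N_def of_nat_diff)
    thus ?thesis using Gamma_fact[of "N - i1"] by simp
  qed
  have fn: "(fact n :: real) = real n * fact N"
    using n4 by (simp add: N_def fact_reduce)
  have fN: "(fact N :: real) = (\<Prod>t<i1. real N - real t) * fact (N - i1)"
    using fact_split[of i1 N] i1N by simp
  have C: "Gamma (real n + 1) / (fact i1 * Gamma (real n - real i1)) = real n * F"
    unfolding G1 G2 fn fN F_def by (simp add: field_simps)
  have V0: "V \<ge> 0" using p by (simp add: V_def nu_def)
  have A3': "\<bar>lf k q\<bar> = q * b * PP b m / KK" using A3 KK0 by (simp add: field_simps)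
  have "\<bar>lf i1 (real n - 1 + a1) * lf j p * lf k q\<bar>
      = \<bar>lf i1 (real n - 1 + a1)\<bar> * \<bar>lf j p\<bar> * \<bar>lf k q\<bar>" by (simp add: abs_mult)
  also have "\<dots> \<le> (F * Q) * V * \<bar>lf k q\<bar>"
    using A1 A2 F0 Q0 by (intro mult_right_mono mult_mono) auto
  also have "\<dots> = (F * V * b / KK) * (q * (PP b m * Q))"
    unfolding A3' by (simp add: field_simps)
  also have "\<dots> \<le> (F * V * b / KK) * (real n / (exp 1 * L))"
    using PPQ F0 V0 b0 KK0 by (intro mult_left_mono) auto
  also have "\<dots> = b / (exp 1 * L) * (real n * F) * (V / KK)"
    by (simp add: field_simps)
  finally show ?thesis unfolding C
    by (simp add: b_def L_def V_def KK_def divide_divide_eq_left)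
qed

theorem lemma20:
  fixes n i1 i2 i3 :: nat and \<alpha>1 \<alpha>2 \<alpha>3 :: real
  assumes "n \<ge> 4"
    and "0 < \<alpha>2" "\<alpha>2 < 1" "0 < \<alpha>3" "\<alpha>3 < 1"
    and "\<alpha>1 = 1 - \<alpha>2 - \<alpha>3"
    and "(i1, i2, i3) \<in> idx_set n"
    and "i2 \<ge> 1" "i3 \<ge> 1" "i2 + i3 \<ge> 3"
  defines "lamst \<equiv> ((real n - 1 + \<alpha>1) / real n, \<alpha>2 / real n, \<alpha>3 / real n)"
  shows "(i2 \<ge> 1 \<and> i3 \<ge> 2 \<longrightarrow>
           \<bar>lagr n (i1, i2, i3) lamst\<bar> \<le>
             (1 - \<alpha>3) / (exp 1 * (ln (real n) - ln 2))
             * (Gamma (real n + 1) / (fact i1 * Gamma (real n - real i1)))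
             * (nu \<alpha>2 i2 / (real i2 powr (1 + \<alpha>2) * (real i3 * (real i3 - 1)))))
       \<and> (i2 \<ge> 2 \<and> i3 \<ge> 1 \<longrightarrow>
           \<bar>lagr n (i1, i2, i3) lamst\<bar> \<le>
             (1 - \<alpha>2) / (exp 1 * (ln (real n) - ln 2))
             * (Gamma (real n + 1) / (fact i1 * Gamma (real n - real i1)))
             * (nu \<alpha>3 i3 / (real i3 powr (1 + \<alpha>3) * (real i2 * (real i2 - 1)))))"
proof -
  have n0: "real n > 0" using assms(1) by simp
  have s: "i1 + i2 + i3 = n" using assms(7) by (simp add: idx_set_def)
  have E: "lagr n (i1, i2, i3) lamst = lf i1 (real n - 1 + \<alpha>1) * lf i2 \<alpha>2 * lf i3 \<alpha>3"
    using n0 by (simp add: lamst_def lagr_def lag_factor_lf)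
  show ?thesis
  proof (intro conjI impI)
    assume h: "i2 \<ge> 1 \<and> i3 \<ge> 2"
    show "\<bar>lagr n (i1, i2, i3) lamst\<bar> \<le>
             (1 - \<alpha>3) / (exp 1 * (ln (real n) - ln 2))
             * (Gamma (real n + 1) / (fact i1 * Gamma (real n - real i1)))
             * (nu \<alpha>2 i2 / (real i2 powr (1 + \<alpha>2) * (real i3 * (real i3 - 1))))"
      unfolding E using GL[of n \<alpha>2 \<alpha>3 \<alpha>1 i1 i2 i3] assms(1-6) s h by simp
  next
    assume h: "i2 \<ge> 2 \<and> i3 \<ge> 1"
    have E2: "lf i1 (real n - 1 + \<alpha>1) * lf i2 \<alpha>2 * lf i3 \<alpha>3 = lf i1 (real n - 1 + \<alpha>1) * lf i3 \<alpha>3 * lf i2 \<alpha>2"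
      by (simp add: ac_simps)
    show "\<bar>lagr n (i1, i2, i3) lamst\<bar> \<le>
             (1 - \<alpha>2) / (exp 1 * (ln (real n) - ln 2))
             * (Gamma (real n + 1) / (fact i1 * Gamma (real n - real i1)))
             * (nu \<alpha>3 i3 / (real i3 powr (1 + \<alpha>3) * (real i2 * (real i2 - 1))))"
      unfolding E E2 using GL[of n \<alpha>3 \<alpha>2 \<alpha>1 i1 i3 i2] assms(1-6) s h by (simp add: add_ac)
  qed
qed

end
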